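(* Let $n,m\geq1$. Let $\bm{p}_{j}=(p_{1j},\ldots,p_{nj})^{T}\in\mathbb{R}^{n}$ for $j=1,\ldots,m$, let $w_{j}>0$ and $d_{j}>0$ and $h_{j}\in\mathbb{R}$ for $j=1,\ldots,m$, let $b_{ik}\in\mathbb{R}\cup\{-\infty\}$ for $i,k=1,\ldots,n$, and let $f_{i}\leq g_{i}$ be reals for $i=1,\ldots,n$. Consider the problem of minimizing over $\bm{x}=(x_{1},\ldots,x_{n})^{T}\in\mathbb{R}^{n}$ $$\max_{1\leq j\leq m}\Big(w_{j}\max_{1\leq i\leq n}|x_{i}-p_{ij}|+h_{j}\Big)$$ subject to $\max_{1\leq i\leq n}|x_{i}-p_{ij}|\leq d_{j}$ for $j=1,\ldots,m$, $b_{ik}+x_{k}\leq x_{i}$ for $i,k=1,\ldots,n$, and $f_{i}\leq x_{i}\leq g_{i}$ for $i=1,\ldots,n$. Suppose that 1. $\max_{1\leq i_{1},\ldots,i_{k-1}\leq n,\ i_{0}=i_{k}=i}(b_{i_{0}i_{1}}+\cdots+b_{i_{k-1}i_{k}})\leq0$ for all $i,k=1,\ldots,n$; 2. $b_{ik}^{\ast}+\max\{\max_{1\leq l\leq m}(p_{kl}-d_{l}),f_{k}\}\leq\min\{\min_{1\leq j\leq m}(p_{ij}+d_{j}),g_{i}\}$ for all $i,k=1,\ldots,n$. Then the minimum value of the problem is $$\theta=\max_{1\leq i,k\leq n}\max_{1\leq j,l\leq m}\max\Bigg\{\frac{w_{l}h_{j}}{w_{j}+w_{l}}+\frac{w_{j}h_{l}}{w_{j}+w_{l}}+\frac{w_{j}w_{l}}{w_{j}+w_{l}}(b_{ik}^{\ast}-p_{ij}+p_{kl}),\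 h_{j}+w_{j}\big(b_{ik}^{\ast}-p_{ij}+\max\{p_{kl}-d_{l},f_{k}\}\big),\ h_{l}+w_{l}\big(b_{ik}^{\ast}-\min\{p_{ij}+d_{j},g_{i}\}+p_{kl}\big)\Bigg\},$$ and all solution vectors $\bm{x}=(x_{i})$ are given by $x_{i}=\max_{1\leq k\leq n}(b_{ik}^{\ast}+u_{k})$, $i=1,\ldots,n$, where the parameter vector $\bm{u}=(u_{k})$ satisfies, for each $k=1,\ldots,n$, $$\max_{1\leq j\leq m}\max\left\{\frac{h_{j}-\theta}{w_{j}}+p_{kj},\ p_{kj}-d_{j},\ f_{k}\right\}\leq u_{k}\leq\min_{1\leq i\leq n}\min_{1\leq j\leq m}\left(\min\left\{\frac{\theta-h_{j}}{w_{j}}+p_{ij},\ p_{ij}+d_{j},\ g_{i}\right\}-b_{ik}^{\ast}\right).$$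
   Context: Conventions: $-\infty+a=-\infty$ for any $a$, and $a-(-\infty)=+\infty$ for real $a$. For $i,k=1,\ldots,n$ define $$\beta_{ik}=\max_{1\leq l\leq n-1}\ \max_{1\leq i_{1},\ldots,i_{l-1}\leq n,\ i_{0}=i,\ i_{l}=k}(b_{i_{0}i_{1}}+\cdots+b_{i_{l-1}i_{l}})$$ (maximum over all index sequences of length $l$ from $i$ to $k$; an empty maximum is $-\infty$), and set $b_{ik}^{\ast}=\beta_{ik}$ if $i\neq k$ and $b_{ii}^{\ast}=\max\{\beta_{ii},0\}$. *)

theory Defs
  imports Complex_Main "HOL-Library.Extended_Real"
begin

text \<open>Vectors are functions nat => real (only indices in range matter).
 Entries b i k are in ereal (meant in real or -infinity); ereal arithmetic realises the conventions
 -inf + a = -inf and a - (-inf) = +inf.\<close>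

fun walk_weight :: "(nat \<Rightarrow> nat \<Rightarrow> ereal) \<Rightarrow> nat \<Rightarrow> nat list \<Rightarrow> nat \<Rightarrow> ereal" where
  "walk_weight b i [] k = b i k"
| "walk_weight b i (j # js) k = b i j + walk_weight b j js k"

text \<open>beta_ik: maximum over sequences of length l, 1 <= l <= n-1 (empty maximum = -inf = Sup {}).\<close>
definition beta :: "nat \<Rightarrow> (nat \<Rightarrow> nat \<Rightarrow> ereal) \<Rightarrow> nat \<Rightarrow> nat \<Rightarrow> ereal" where
  "beta n b i k = Sup {walk_weight b i js k | js. 1 \<le> Suc (length js) \<and> Suc (length js) \<le> n - 1 \<and> set js \<subseteq> {1..n}}"

definition bstar :: "nat \<Rightarrow> (nat \<Rightarrow> nat \<Rightarrow> ereal) \<Rightarrow> nat \<Rightarrow> nat \<Rightarrow> ereal" where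
  "bstar n b i k = (if i = k then max (beta n b i i) 0 else beta n b i k)"

definition cycle_max :: "nat \<Rightarrow> (nat \<Rightarrow> nat \<Rightarrow> ereal) \<Rightarrow> nat \<Rightarrow> nat \<Rightarrow> ereal" where
  "cycle_max n b i l = Sup {walk_weight b i js i | js. length js = l - 1 \<and> set js \<subseteq> {1..n}}"

definition objective :: "nat \<Rightarrow> nat \<Rightarrow> (nat \<Rightarrow> nat \<Rightarrow> real) \<Rightarrow> (nat \<Rightarrow> real) \<Rightarrow> (nat \<Rightarrow> real)
    \<Rightarrow> (nat \<Rightarrow> real) \<Rightarrow> real" where
  "objective n m p w h x = (MAX j\<in>{1..m}. w j * (MAX i\<in>{1..n}. \<bar>x i - p i j\<bar>) + h j)"

definition feasible :: "nat \<Rightarrow> nat \<Rightarrow> (nat \<Rightarrow> nat \<Rightarrow> real) \<Rightarrow> (nat \<Rightarrow> real) \<Rightarrow> (nat \<Rightarrow> nat \<Rightarrow> ereal)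
    \<Rightarrow> (nat \<Rightarrow> real) \<Rightarrow> (nat \<Rightarrow> real) \<Rightarrow> (nat \<Rightarrow> real) \<Rightarrow> bool" where
  "feasible n m p d b f g x \<longleftrightarrow>
     (\<forall>j\<in>{1..m}. (MAX i\<in>{1..n}. \<bar>x i - p i j\<bar>) \<le> d j) \<and>
     (\<forall>i\<in>{1..n}. \<forall>k\<in>{1..n}. b i k + ereal (x k) \<le> ereal (x i)) \<and>
     (\<forall>i\<in>{1..n}. f i \<le> x i \<and> x i \<le> g i)"

definition theta :: "nat \<Rightarrow> nat \<Rightarrow> (nat \<Rightarrow> nat \<Rightarrow> real) \<Rightarrow> (nat \<Rightarrow> real) \<Rightarrow> (nat \<Rightarrow> real) \<Rightarrow> (nat \<Rightarrow> real)
    \<Rightarrow> (nat \<Rightarrow> nat \<Rightarrow> ereal) \<Rightarrow> (nat \<Rightarrow> real) \<Rightarrow> (nat \<Rightarrow> real) \<Rightarrow> ereal" where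
  "theta n m p w d h b f g =
    (MAX i\<in>{1..n}. MAX k\<in>{1..n}. MAX j\<in>{1..m}. MAX l\<in>{1..m}.
       max (ereal (w l * h j / (w j + w l)) + ereal (w j * h l / (w j + w l))
              + ereal (w j * w l / (w j + w l)) * (bstar n b i k - ereal (p i j) + ereal (p k l)))
         (max (ereal (h j) + ereal (w j) * (bstar n b i k - ereal (p i j) + ereal (max (p k l - d l) (f k))))
              (ereal (h l) + ereal (w l) * (bstar n b i k - ereal (min (p i j + d j) (g i)) + ereal (p k l)))))"

end

theory Submission imports Defs begin

fun pw :: "(nat \<Rightarrow> nat \<Rightarrow> ereal) \<Rightarrow> nat list \<Rightarrow> ereal" where
  "pw b [] = 0" | "pw b [v] = 0" | "pw b (u # v # vs) = b u v + pw b (v # vs)"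

lemma walk_pw: "walk_weight b i js k = pw b (i # js @ [k])"
  by (induction js arbitrary: i) auto

lemma pw_append: "pw b (xs @ [x] @ ys) = pw b (xs @ [x]) + pw b (x # ys)"
proof (induction xs)
  case (Cons a xs) then show ?case by (cases xs) (auto simp: add.assoc)
qed simp

lemma distinct_len:
  assumes "set vs \<subseteq> {1..n}" "distinct vs" shows "length vs \<le> n"
proof -
  have "length vs = card (set vs)" using assms(2) by (simp add: distinct_card)
  also have "\<dots> \<le> card {1..n}" by (rule card_mono) (use assms in auto)
  finally show ?thesis by simp
qed

lemma Sup_add_le:
  fixes S :: "ereal set"
  assumes "\<And>s. s \<in> S \<Longrightarrow> s + ereal c \<le> e" shows "Sup S + ereal c \<le> e"
proof -
  have "Sup S \<le> e - ereal c" by (rule Sup_least) (use assms in \<open>simp add: ereal_le_minus\<close>)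
  then show ?thesis by (simp add: ereal_le_minus)
qed

lemma closure_pw:
  fixes b :: "nat \<Rightarrow> nat \<Rightarrow> ereal"
  assumes "\<forall>i\<in>{1..n}. \<forall>k\<in>{1..n}. b i k + ereal (x k) \<le> ereal (x i)"
  shows "set vs \<subseteq> {1..n} \<Longrightarrow> vs \<noteq> [] \<Longrightarrow> pw b vs + ereal (x (last vs)) \<le> ereal (x (hd vs))"
proof (induction vs)
  case (Cons u vs)
  show ?case
  proof (cases vs)
    case Nil then show ?thesis by simp
  next
    case (Cons v vs')
    have IH: "pw b vs + ereal (x (last vs)) \<le> ereal (x (hd vs))"
      using Cons.IH Cons.prems local.Cons by auto
    have "pw b (u # vs) + ereal (x (last (u # vs))) = b u v + (pw b vs + ereal (x (last vs)))"
      using local.Cons by (simp add: add.assoc)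
    also have "\<dots> \<le> b u v + ereal (x v)" using IH local.Cons by (intro add_left_mono) auto
    also have "\<dots> \<le> ereal (x u)" using assms Cons.prems local.Cons by auto
    finally show ?thesis by simp
  qed
qed simp

lemma r1: fixes wj wl :: real assumes "wj>0" "wl>0"
  shows "(\<beta> + (pkl - (t-hl)/wl) \<le> pij + (t-hj)/wj) \<longleftrightarrow> wl*hj/(wj+wl) + wj*hl/(wj+wl) + wj*wl/(wj+wl)*(\<beta> - pij + pkl) \<le> t"
proof -
  have "(\<beta> + (pkl - (t-hl)/wl) \<le> pij + (t-hj)/wj) \<longleftrightarrow> wj*wl*(\<beta> + (pkl - (t-hl)/wl)) \<le> wj*wl*(pij + (t-hj)/wj)"
    using assms by simp
  also have "\<dots> \<longleftrightarrow> wj*wl*(\<beta> - pij + pkl) + wj*hl + wl*hj \<le> (wj+wl)*t"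
  proof -
    have eq1: "wj*wl*(\<beta> + (pkl - (t-hl)/wl)) = wj*wl*(\<beta>+pkl) - wj*(t-hl)"
      using assms by (simp add: field_simps)
    have eq2: "wj*wl*(pij + (t-hj)/wj) = wj*wl*pij + wl*(t-hj)"
      using assms by (simp add: field_simps)
    show ?thesis unfolding eq1 eq2 by (simp add: algebra_simps)
  qed
  also have "\<dots> \<longleftrightarrow> (wj*wl*(\<beta> - pij + pkl) + wj*hl + wl*hj)/(wj+wl) \<le> t"
    using assms by (simp add: pos_divide_le_eq mult.commute)
  also have "(wj*wl*(\<beta> - pij + pkl) + wj*hl + wl*hj)/(wj+wl) = wl*hj/(wj+wl) + wj*hl/(wj+wl) + wj*wl/(wj+wl)*(\<beta> - pij + pkl)"
    by (simp add: add_divide_distrib)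
  finally show ?thesis .
qed
lemma r2: fixes wj :: real assumes "wj>0"
  shows "(\<beta> + M \<le> pij + (t-hj)/wj) \<longleftrightarrow> hj + wj*(\<beta> - pij + M) \<le> t"
proof -
  have "(\<beta> + M \<le> pij + (t-hj)/wj) \<longleftrightarrow> \<beta> + M - pij \<le> (t-hj)/wj" by linarith
  also have "\<dots> \<longleftrightarrow> wj*(\<beta> + M - pij) \<le> t - hj" using assms by (simp add: pos_le_divide_eq mult.commute)
  finally show ?thesis by (simp add: algebra_simps)
qed
lemma r3: fixes wl :: real assumes "wl>0"
  shows "(\<beta> + (pkl - (t-hl)/wl) \<le> N) \<longleftrightarrow> hl + wl*(\<beta> - N + pkl) \<le> t"
proof -
  have "(\<beta> + (pkl - (t-hl)/wl) \<le> N) \<longleftrightarrow> \<beta> + pkl - N \<le> (t-hl)/wl" by linarith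
  also have "\<dots> \<longleftrightarrow> wl*(\<beta> + pkl - N) \<le> t - hl" using assms by (simp add: pos_le_divide_eq mult.commute)
  finally show ?thesis by (simp add: algebra_simps)
qed

locale cfg =
  fixes n m :: nat
    and p :: "nat \<Rightarrow> nat \<Rightarrow> real"
    and w d h f g :: "nat \<Rightarrow> real"
    and b :: "nat \<Rightarrow> nat \<Rightarrow> ereal"
  assumes n1: "n \<ge> 1" and m1: "m \<ge> 1"
    and wd: "\<forall>j\<in>{1..m}. w j > 0 \<and> d j > 0"
    and binf: "\<forall>i\<in>{1..n}. \<forall>k\<in>{1..n}. b i k \<noteq> \<infinity>"
    and fg: "\<forall>i\<in>{1..n}. f i \<le> g i"
    and cond1: "\<forall>i\<in>{1..n}. \<forall>l\<in>{1..n}. cycle_max n b i l \<le> 0"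
    and cond2: "\<forall>i\<in>{1..n}. \<forall>k\<in>{1..n}.
        bstar n b i k + ereal (max (MAX l\<in>{1..m}. p k l - d l) (f k))
          \<le> ereal (min (MIN j\<in>{1..m}. p i j + d j) (g i))"
begin

lemma cycle_le0:
  "set vs \<subseteq> {1..n} \<Longrightarrow> vs \<noteq> [] \<Longrightarrow> hd vs = last vs \<Longrightarrow> pw b vs \<le> 0"
proof (induction vs rule: length_induct)
  case (1 vs)
  show ?case
  proof (cases "length vs \<le> n + 1")
    case True
    show ?thesis
    proof (cases "length vs = 1")
      case True then obtain v where "vs = [v]" by (cases vs) auto
      then show ?thesis by simp
    next
      case False
      with 1(3) obtain v ws where vs: "vs = v # ws" "ws \<noteq> []" by (cases vs) auto
      define js where "js = butlast ws"
      have ws: "ws = js @ [v]" using vs 1(4) unfolding js_def by simp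
      have vs2: "vs = v # js @ [v]" using vs ws by simp
      have vin: "v \<in> {1..n}" using 1(2) vs by auto
      have lin: "length vs - 1 \<in> {1..n}" using True vs2 by auto
      have "pw b vs = walk_weight b v js v" using vs2 by (simp add: walk_pw)
      also have "\<dots> \<le> cycle_max n b v (length vs - 1)"
        unfolding cycle_max_def by (rule Sup_upper) (use vs2 1(2) in auto)
      also have "\<dots> \<le> 0" using cond1 vin lin by auto
      finally show ?thesis .
    qed
  next
    case False
    with 1(3) obtain v ws where vs: "vs = v # ws" by (cases vs) auto
    have "\<not> distinct ws"
      using distinct_len[of ws n] 1(2) vs False by auto
    then obtain a x c e where ws: "ws = a @ [x] @ c @ [x] @ e"
      using not_distinct_decomp by blast
    have "pw b vs = pw b ((v # a) @ [x]) + pw b ((x # c) @ [x] @ e)"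
      using pw_append[of b "v # a" x "c @ [x] @ e"] vs ws by simp
    also have "\<dots> = pw b ((v # a) @ [x]) + (pw b ((x # c) @ [x]) + pw b (x # e))"
      by (simp only: pw_append)
    also have "\<dots> \<le> pw b ((v # a) @ [x]) + (0 + pw b (x # e))"
    proof -
      have "pw b ((x # c) @ [x]) \<le> 0"
        using 1(1) vs ws 1(2) by (auto)
      then show ?thesis by (intro add_left_mono add_right_mono)
    qed
    also have "\<dots> = pw b ((v # a) @ [x] @ e)" using pw_append[of b "v # a" x e] by simp
    also have "\<dots> \<le> 0"
      using 1(1)[rule_format, of "(v # a) @ [x] @ e"] vs ws 1(2) 1(4)
      by (cases e) auto
    finally show ?thesis .
  qed
qed


lemma beta_le_bstar: "beta n b i k \<le> bstar n b i k"
  unfolding bstar_def by auto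

lemma path_le_bstar:
  "set vs \<subseteq> {1..n} \<Longrightarrow> vs \<noteq> [] \<Longrightarrow> pw b vs \<le> bstar n b (hd vs) (last vs)"
proof (induction vs rule: length_induct)
  case (1 vs)
  show ?case
  proof (cases "length vs \<le> n")
    case True
    show ?thesis
    proof (cases "length vs = 1")
      case True then obtain v where "vs = [v]" by (cases vs) auto
      then show ?thesis by (simp add: bstar_def)
    next
      case False
      with 1(3) obtain v ws where vs: "vs = v # ws" "ws \<noteq> []" by (cases vs) auto
      define js where "js = butlast ws"
      define k where "k = last ws"
      have vs2: "vs = v # js @ [k]" using vs unfolding js_def k_def by simp
      have "pw b vs = walk_weight b v js k" using vs2 by (simp add: walk_pw)
      also have "\<dots> \<le> beta n b v k"
        unfolding beta_def by (rule Sup_upper) (use vs2 1(2) True in auto)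
      also have "\<dots> \<le> bstar n b (hd vs) (last vs)" using vs2 beta_le_bstar by simp
      finally show ?thesis .
    qed
  next
    case False
    have "\<not> distinct vs"
      using distinct_len[of vs n] 1(2) False by auto
    then obtain a x c e where vs: "vs = a @ [x] @ c @ [x] @ e"
      using not_distinct_decomp by blast
    have "pw b vs = pw b (a @ [x]) + pw b ((x # c) @ [x] @ e)"
      using pw_append[of b a x "c @ [x] @ e"] vs by simp
    also have "\<dots> = pw b (a @ [x]) + (pw b ((x # c) @ [x]) + pw b (x # e))"
      by (simp only: pw_append)
    also have "\<dots> \<le> pw b (a @ [x]) + (0 + pw b (x # e))"
    proof -
      have "pw b ((x # c) @ [x]) \<le> 0"
        by (rule cycle_le0) (use vs 1(2) in auto)
      then show ?thesis by (intro add_left_mono add_right_mono)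
    qed
    also have "\<dots> = pw b (a @ [x] @ e)" using pw_append[of b a x e] by simp
    also have "\<dots> \<le> bstar n b (hd vs) (last vs)"
      using 1(1)[rule_format, of "a @ [x] @ e"] vs 1(2)
      by (cases e; cases a) auto
    finally show ?thesis .
  qed
qed

lemma closure_bstar:
  assumes "\<forall>i\<in>{1..n}. \<forall>k\<in>{1..n}. b i k + ereal (x k) \<le> ereal (x i)"
    and "i \<in> {1..n}" "k \<in> {1..n}"
  shows "bstar n b i k + ereal (x k) \<le> ereal (x i)"
proof -
  have "beta n b i k + ereal (x k) \<le> ereal (x i)"
    unfolding beta_def
  proof (rule Sup_add_le, clarify)
    fix js assume js: "set js \<subseteq> {1..n}"
    show "walk_weight b i js k + ereal (x k) \<le> ereal (x i)"
      using closure_pw[OF assms(1), of "i # js @ [k]"] js assms(2,3) by (simp add: walk_pw)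
  qed
  then show ?thesis unfolding bstar_def by (auto simp: max_def)
qed

lemma bstar_not_inf: "i \<in> {1..n} \<Longrightarrow> k \<in> {1..n} \<Longrightarrow> bstar n b i k \<noteq> \<infinity>"
  using cond2 by fastforce

lemma bstar_diag: "0 \<le> bstar n b i i"
  unfolding bstar_def by simp

lemma b_bstar:
  assumes "i \<in> {1..n}" "k \<in> {1..n}" "l \<in> {1..n}"
  shows "b i k + bstar n b k l \<le> bstar n b i l"
proof (cases "b i k")
  case MInf
  then show ?thesis using bstar_not_inf[OF assms(2,3)] by (cases "bstar n b k l") auto
next
  case PInf then show ?thesis using binf assms by auto
next
  case (real r)
  have pth: "b i k + walk_weight b k js l \<le> bstar n b i l" if "set js \<subseteq> {1..n}" for js
    using path_le_bstar[of "i # k # js @ [l]"] that assms by (simp add: walk_pw)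
  have 1: "beta n b k l + b i k \<le> bstar n b i l"
    unfolding beta_def real
  proof (rule Sup_add_le, clarify)
    fix js assume "set js \<subseteq> {1..n}"
    then show "walk_weight b k js l + ereal r \<le> bstar n b i l" using pth real by (simp add: add.commute)
  qed
  have 2: "b i l \<le> bstar n b i l"
    using path_le_bstar[of "[i, l]"] assms by simp
  show ?thesis unfolding bstar_def[of n b k l] using 1 2 real
    by (cases "k = l") (auto simp: max_def add.commute)
qed


definition Lb :: "real \<Rightarrow> nat \<Rightarrow> real" where
  "Lb t k = (MAX j\<in>{1..m}. max (p k j - (t - h j) / w j) (max (p k j - d j) (f k)))"
definition Ub :: "real \<Rightarrow> nat \<Rightarrow> real" where
  "Ub t i = (MIN j\<in>{1..m}. min (p i j + (t - h j) / w j) (min (p i j + d j) (g i)))"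

lemma ne_n: "{1..n} \<noteq> {}" using n1 by simp
lemma ne_m: "{1..m} \<noteq> {}" using m1 by simp

lemma feas_bounds:
  assumes feas: "feasible n m p d b f g x" and obj: "objective n m p w h x \<le> t" and k: "k \<in> {1..n}"
  shows "Lb t k \<le> x k \<and> x k \<le> Ub t k"
proof -
  have a: "\<bar>x k - p k j\<bar> \<le> (t - h j) / w j" if j: "j \<in> {1..m}" for j
  proof -
    have wj: "w j > 0" using wd j by auto
    have "\<bar>x k - p k j\<bar> \<le> (MAX i\<in>{1..n}. \<bar>x i - p i j\<bar>)" using k by (intro Max_ge) auto
    hence "w j * \<bar>x k - p k j\<bar> + h j \<le> w j * (MAX i\<in>{1..n}. \<bar>x i - p i j\<bar>) + h j"
      using wj by (simp add: mult_left_mono)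
    also have "\<dots> \<le> objective n m p w h x" unfolding objective_def using j by (intro Max_ge) auto
    finally have "w j * \<bar>x k - p k j\<bar> \<le> t - h j" using obj by linarith
    then show ?thesis using wj by (simp add: pos_le_divide_eq mult.commute)
  qed
  have bb: "\<bar>x k - p k j\<bar> \<le> d j" if j: "j \<in> {1..m}" for j
  proof -
    have "\<bar>x k - p k j\<bar> \<le> (MAX i\<in>{1..n}. \<bar>x i - p i j\<bar>)" using k by (intro Max_ge) auto
    also have "\<dots> \<le> d j" using feas j unfolding feasible_def by auto
    finally show ?thesis .
  qed
  have c: "f k \<le> x k \<and> x k \<le> g k" using feas k unfolding feasible_def by auto
  have e: "\<forall>j\<in>{1..m}. p k j - (t-h j)/w j \<le> x k \<and> x k \<le> p k j + (t - h j)/w j \<and> p k j - d j \<le> x k \<and> x k \<le> p k j + d j"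
  proof
    fix j assume j: "j \<in> {1..m}"
    show "p k j - (t-h j)/w j \<le> x k \<and> x k \<le> p k j + (t - h j)/w j \<and> p k j - d j \<le> x k \<and> x k \<le> p k j + d j"
      using a[OF j] bb[OF j] by (auto simp: abs_le_iff)
  qed
  show ?thesis unfolding Lb_def Ub_def using e c ne_m
    by (auto simp: Max_le_iff Min_ge_iff)
qed

lemma bounds_feas:
  assumes cl: "\<forall>i\<in>{1..n}. \<forall>k\<in>{1..n}. b i k + ereal (x k) \<le> ereal (x i)"
    and bd: "\<forall>k\<in>{1..n}. Lb t k \<le> x k \<and> x k \<le> Ub t k"
  shows "feasible n m p d b f g x \<and> objective n m p w h x \<le> t"
proof -
  have all: "\<bar>x k - p k j\<bar> \<le> (t - h j) / w j \<and> \<bar>x k - p k j\<bar> \<le> d j \<and> f k \<le> x k \<and> x k \<le> g k"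
    if k: "k \<in> {1..n}" and j: "j \<in> {1..m}" for k j
  proof -
    have "Lb t k \<le> x k" "x k \<le> Ub t k" using bd k by auto
    then have "\<forall>j\<in>{1..m}. p k j - (t-h j)/w j \<le> x k \<and> p k j - d j \<le> x k \<and> f k \<le> x k"
       "\<forall>j\<in>{1..m}. x k \<le> p k j + (t - h j)/w j \<and> x k \<le> p k j + d j \<and> x k \<le> g k"
      unfolding Lb_def Ub_def using ne_m by auto
    from this(1)[rule_format, OF j] this(2)[rule_format, OF j] show ?thesis
      by (auto simp: abs_le_iff)
  qed
  have fgx: "\<forall>k\<in>{1..n}. f k \<le> x k \<and> x k \<le> g k" using all[of _ 1] m1 by auto
  have "feasible n m p d b f g x" unfolding feasible_def using cl all fgx ne_n ne_m
    by (auto simp: Max_le_iff)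
  moreover have "objective n m p w h x \<le> t"
    unfolding objective_def
  proof (subst Max_le_iff, simp, use ne_m in simp, clarify)
    fix j assume j: "j \<in> {1..m}"
    have wj: "w j > 0" using wd j by auto
    have "(MAX i\<in>{1..n}. \<bar>x i - p i j\<bar>) \<le> (t - h j) / w j"
      using all j ne_n by (auto simp: Max_le_iff)
    then have "w j * (MAX i\<in>{1..n}. \<bar>x i - p i j\<bar>) \<le> t - h j"
      using wj by (simp add: pos_le_divide_eq mult.commute)
    then show "w j * (MAX i\<in>{1..n}. \<bar>x i - p i j\<bar>) + h j \<le> t" by linarith
  qed
  ultimately show ?thesis by blast
qed


definition TT :: "nat \<Rightarrow> nat \<Rightarrow> nat \<Rightarrow> nat \<Rightarrow> ereal" where
  "TT i k j l = max (ereal (w l * h j / (w j + w l)) + ereal (w j * h l / (w j + w l))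
              + ereal (w j * w l / (w j + w l)) * (bstar n b i k - ereal (p i j) + ereal (p k l)))
         (max (ereal (h j) + ereal (w j) * (bstar n b i k - ereal (p i j) + ereal (max (p k l - d l) (f k))))
              (ereal (h l) + ereal (w l) * (bstar n b i k - ereal (min (p i j + d j) (g i)) + ereal (p k l))))"

lemma theta_TT: "theta n m p w d h b f g = (MAX i\<in>{1..n}. MAX k\<in>{1..n}. MAX j\<in>{1..m}. MAX l\<in>{1..m}. TT i k j l)"
  unfolding theta_def TT_def ..

lemma theta_le_iff: "theta n m p w d h b f g \<le> e \<longleftrightarrow> (\<forall>i\<in>{1..n}. \<forall>k\<in>{1..n}. \<forall>j\<in>{1..m}. \<forall>l\<in>{1..m}. TT i k j l \<le> e)"
  unfolding theta_TT using ne_n ne_m by simp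

lemma TT_minf: assumes "bstar n b i k = -\<infinity>" "j \<in> {1..m}" "l \<in> {1..m}" shows "TT i k j l = -\<infinity>"
proof -
  have "w j > 0" "w l > 0" using wd assms by auto
  moreover have h1: "ereal hh + ereal a * (-\<infinity> + ereal x) = -\<infinity>" if "a > 0" for hh a x
    using that by simp
  moreover have h2: "ereal hh + ereal a * (-\<infinity> - ereal y + ereal x) = -\<infinity>" if "a > 0" for hh a x y
    using that by simp
  ultimately show ?thesis unfolding TT_def assms(1) by (simp only: h1 h2) simp
qed

lemma TT_real: assumes "bstar n b i k = ereal \<beta>" "j \<in> {1..m}" "l \<in> {1..m}"
  shows "TT i k j l = ereal (max (w l * h j / (w j + w l) + w j * h l / (w j + w l) + w j * w l / (w j + w l) * (\<beta> - p i j + p k l))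
     (max (h j + w j * (\<beta> - p i j + max (p k l - d l) (f k))) (h l + w l * (\<beta> - min (p i j + d j) (g i) + p k l))))"
  unfolding TT_def assms(1) by (simp del: ereal_max ereal_min add: ereal_max[symmetric] ereal_min[symmetric])

lemma pair_iff:
  assumes i: "i \<in> {1..n}" and k: "k \<in> {1..n}"
  shows "(\<forall>j\<in>{1..m}. \<forall>l\<in>{1..m}. TT i k j l \<le> ereal t) \<longleftrightarrow> bstar n b i k + ereal (Lb t k) \<le> ereal (Ub t i)"
proof (cases "bstar n b i k")
  case PInf then show ?thesis using bstar_not_inf[OF i k] by simp
next
  case MInf then show ?thesis using TT_minf by simp
next
  case (real \<beta>)
  define P where "P l = p k l - (t - h l) / w l" for l
  define Q where "Q j = p i j + (t - h j) / w j" for j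
  define M where "M l = max (p k l - d l) (f k)" for l
  define N where "N j = min (p i j + d j) (g i)" for j
  have c2: "\<beta> + M l \<le> N j" if j: "j \<in> {1..m}" and l: "l \<in> {1..m}" for j l
  proof -
    have "\<beta> + max (MAX l\<in>{1..m}. p k l - d l) (f k) \<le> min (MIN j\<in>{1..m}. p i j + d j) (g i)"
    proof -
      have "bstar n b i k + ereal (max (MAX l\<in>{1..m}. p k l - d l) (f k))
          \<le> ereal (min (MIN j\<in>{1..m}. p i j + d j) (g i))" using cond2 i k by blast
      then show ?thesis unfolding real by (simp only: plus_ereal.simps(1) ereal_less_eq(3))
    qed
    moreover have "p k l - d l \<le> (MAX l\<in>{1..m}. p k l - d l)" using l by (intro Max_ge) auto
    moreover have "(MIN j\<in>{1..m}. p i j + d j) \<le> p i j + d j" using j by (intro Min_le) auto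
    ultimately show ?thesis unfolding M_def N_def by linarith
  qed
  have lhs: "TT i k j l \<le> ereal t \<longleftrightarrow> (\<beta> + P l \<le> Q j \<and> \<beta> + M l \<le> Q j \<and> \<beta> + P l \<le> N j)"
    if j: "j \<in> {1..m}" and l: "l \<in> {1..m}" for j l
  proof -
    have wj: "w j > 0" and wl: "w l > 0" using wd j l by auto
    show ?thesis unfolding TT_real[OF real j l] P_def Q_def M_def N_def
      using r1[OF wj wl, of \<beta> "p k l" t "h l" "p i j" "h j"] r2[OF wj, of \<beta> "max (p k l - d l) (f k)" "p i j" t "h j"]
        r3[OF wl, of \<beta> "p k l" t "h l" "min (p i j + d j) (g i)"]
      by simp
  qed
  have rhs: "bstar n b i k + ereal (Lb t k) \<le> ereal (Ub t i) \<longleftrightarrow> (\<forall>j\<in>{1..m}. \<forall>l\<in>{1..m}. \<beta> + max (P l) (M l) \<le> min (Q j) (N j))"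
  proof -
    have "bstar n b i k + ereal (Lb t k) \<le> ereal (Ub t i) \<longleftrightarrow> \<beta> + Lb t k \<le> Ub t i" using real by simp
    also have "\<dots> \<longleftrightarrow> Lb t k \<le> Ub t i - \<beta>" by linarith
    also have "\<dots> \<longleftrightarrow> (\<forall>l\<in>{1..m}. max (P l) (M l) \<le> Ub t i - \<beta>)"
      unfolding Lb_def P_def M_def using ne_m by simp
    also have "\<dots> \<longleftrightarrow> (\<forall>l\<in>{1..m}. \<beta> + max (P l) (M l) \<le> Ub t i)"
      by (intro ball_cong refl) linarith
    also have "\<dots> \<longleftrightarrow> (\<forall>l\<in>{1..m}. \<forall>j\<in>{1..m}. \<beta> + max (P l) (M l) \<le> min (Q j) (N j))"
      unfolding Ub_def Q_def N_def using ne_m by simp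
    finally show ?thesis by auto
  qed
  have maxmin: "(\<beta> + max a a' \<le> min c c') \<longleftrightarrow> (\<beta> + a \<le> c \<and> \<beta> + a' \<le> c \<and> \<beta> + a \<le> c' \<and> \<beta> + a' \<le> c')" for a a' c c' :: real
    by (auto simp: max_def min_def)
  show ?thesis unfolding rhs
  proof (intro iffI ballI)
    fix j l assume A: "\<forall>j\<in>{1..m}. \<forall>l\<in>{1..m}. TT i k j l \<le> ereal t" and j: "j \<in> {1..m}" and l: "l \<in> {1..m}"
    have "TT i k j l \<le> ereal t" using A j l by blast
    then show "\<beta> + max (P l) (M l) \<le> min (Q j) (N j)"
      unfolding maxmin using lhs[OF j l] c2[OF j l] by blast
  next
    fix j l assume A: "\<forall>j\<in>{1..m}. \<forall>l\<in>{1..m}. \<beta> + max (P l) (M l) \<le> min (Q j) (N j)" and j: "j \<in> {1..m}" and l: "l \<in> {1..m}"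
    have "\<beta> + max (P l) (M l) \<le> min (Q j) (N j)" using A j l by blast
    then show "TT i k j l \<le> ereal t"
      unfolding maxmin using lhs[OF j l] by blast
  qed
qed

lemma theta_le_iff2: "theta n m p w d h b f g \<le> ereal t \<longleftrightarrow> (\<forall>i\<in>{1..n}. \<forall>k\<in>{1..n}. bstar n b i k + ereal (Lb t k) \<le> ereal (Ub t i))"
  unfolding theta_le_iff using pair_iff by auto


lemma TT_fin: assumes "i \<in> {1..n}" "k \<in> {1..n}" "j \<in> {1..m}" "l \<in> {1..m}"
  shows "TT i k j l < \<infinity>"
proof (cases "bstar n b i k")
  case (real r) then show ?thesis by (simp add: TT_real[OF real assms(3,4)] del: ereal_max)
next
  case PInf then show ?thesis using bstar_not_inf assms by simp
next
  case MInf then show ?thesis using TT_minf[OF MInf assms(3,4)] by simp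
qed

lemma maxfin: "finite A \<Longrightarrow> A \<noteq> {} \<Longrightarrow> (\<forall>a\<in>A. F a \<noteq> (\<infinity>::ereal)) \<Longrightarrow> Max (F ` A) \<noteq> \<infinity>"
  by (metis (no_types) Max_in finite_imageI image_iff image_is_empty)

lemma theta_finite: obtains t where "theta n m p w d h b f g = ereal t"
proof -
  have "theta n m p w d h b f g \<noteq> \<infinity>"
    unfolding theta_TT using ne_n ne_m TT_fin by (intro maxfin ballI) auto
  moreover have "theta n m p w d h b f g \<noteq> -\<infinity>"
  proof
    assume "theta n m p w d h b f g = -\<infinity>"
    then have "TT 1 1 1 1 \<le> -\<infinity>" using theta_le_iff[of "-\<infinity>"] n1 m1 by auto
    moreover obtain r where "bstar n b 1 1 = ereal r"
      using bstar_not_inf[of 1 1] bstar_diag[of 1] n1 by (cases "bstar n b 1 1") auto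
    ultimately show False using TT_real[of 1 1 r 1 1] m1 by (simp del: ereal_max)
  qed
  ultimately show ?thesis using that by (cases "theta n m p w d h b f g") auto
qed

lemma lower:
  assumes feas: "feasible n m p d b f g x"
  shows "theta n m p w d h b f g \<le> ereal (objective n m p w h x)"
proof -
  define t where "t = objective n m p w h x"
  have cl: "\<forall>i\<in>{1..n}. \<forall>k\<in>{1..n}. b i k + ereal (x k) \<le> ereal (x i)"
    using feas unfolding feasible_def by blast
  have "bstar n b i k + ereal (Lb t k) \<le> ereal (Ub t i)" if i: "i \<in> {1..n}" and k: "k \<in> {1..n}" for i k
  proof -
    have "bstar n b i k + ereal (Lb t k) \<le> bstar n b i k + ereal (x k)"
      using feas_bounds[OF feas _ k, of t] t_def by (intro add_left_mono) simp
    also have "\<dots> \<le> ereal (x i)" using closure_bstar[OF cl i k] .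
    also have "\<dots> \<le> ereal (Ub t i)" using feas_bounds[OF feas _ i, of t] t_def by simp
    finally show ?thesis .
  qed
  then show ?thesis using theta_le_iff2 t_def by blast
qed

lemma construct:
  assumes lb: "\<forall>k\<in>{1..n}. Lb t k \<le> u k"
    and ub: "\<forall>i\<in>{1..n}. \<forall>k\<in>{1..n}. bstar n b i k + ereal (u k) \<le> ereal (Ub t i)"
    and xe: "\<forall>i\<in>{1..n}. ereal (x i) = (MAX k\<in>{1..n}. bstar n b i k + ereal (u k))"
  shows "feasible n m p d b f g x \<and> objective n m p w h x \<le> t"
proof (rule bounds_feas)
  show "\<forall>i\<in>{1..n}. \<forall>k\<in>{1..n}. b i k + ereal (x k) \<le> ereal (x i)"
  proof (intro ballI)
    fix i k assume i: "i \<in> {1..n}" and k: "k \<in> {1..n}"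
    have "ereal (x k) \<in> (\<lambda>l. bstar n b k l + ereal (u l)) ` {1..n}"
      using xe k Max_in[of "(\<lambda>l. bstar n b k l + ereal (u l)) ` {1..n}"] ne_n by auto
    then obtain l where l: "l \<in> {1..n}" and xk: "ereal (x k) = bstar n b k l + ereal (u l)" by auto
    have "b i k + ereal (x k) = (b i k + bstar n b k l) + ereal (u l)" using xk by (simp add: add.assoc)
    also have "\<dots> \<le> bstar n b i l + ereal (u l)" using b_bstar[OF i k l] by (rule add_right_mono)
    also have "\<dots> \<le> ereal (x i)" using xe i l by (simp add: Max_ge_iff)
    finally show "b i k + ereal (x k) \<le> ereal (x i)" .
  qed
  show "\<forall>k\<in>{1..n}. Lb t k \<le> x k \<and> x k \<le> Ub t k"
  proof
    fix k assume k: "k \<in> {1..n}"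
    have "ereal (u k) = 0 + ereal (u k)" by simp
    also have "\<dots> \<le> bstar n b k k + ereal (u k)" using bstar_diag by (rule add_right_mono)
    also have "\<dots> \<le> ereal (x k)" using xe k by (simp add: Max_ge_iff)
    finally have "u k \<le> x k" by simp
    then have "Lb t k \<le> x k" using lb k by (meson order_trans)
    moreover have "ereal (x k) \<le> ereal (Ub t k)" using xe ub k ne_n by simp
    ultimately show "Lb t k \<le> x k \<and> x k \<le> Ub t k" by simp
  qed
qed


lemma lowbound_iff:
  "(MAX j\<in>{1..m}. max ((ereal (h j) - ereal t) / ereal (w j) + ereal (p k j))
                        (ereal (max (p k j - d j) (f k)))) \<le> ereal v
   \<longleftrightarrow> Lb t k \<le> v"
proof -
  have e: "(ereal (h j) - ereal t) / ereal (w j) + ereal (p k j) = ereal (p k j - (t - h j) / w j)"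
    if j: "j \<in> {1..m}" for j
  proof -
    have "w j > 0" using wd j by auto
    then show ?thesis by (simp add: field_simps)
  qed
  have "(MAX j\<in>{1..m}. max ((ereal (h j) - ereal t) / ereal (w j) + ereal (p k j))
                        (ereal (max (p k j - d j) (f k)))) \<le> ereal v
     \<longleftrightarrow> (\<forall>j\<in>{1..m}. max ((ereal (h j) - ereal t) / ereal (w j) + ereal (p k j))
                        (ereal (max (p k j - d j) (f k))) \<le> ereal v)"
    using ne_m by simp
  also have "\<dots> \<longleftrightarrow> (\<forall>j\<in>{1..m}. max (p k j - (t - h j) / w j) (max (p k j - d j) (f k)) \<le> v)"
    using e by (simp del: ereal_max add: ereal_max[symmetric])
  also have "\<dots> \<longleftrightarrow> Lb t k \<le> v" unfolding Lb_def using ne_m by simp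
  finally show ?thesis .
qed

lemma upbound_iff:
  assumes k: "k \<in> {1..n}"
  shows "ereal v \<le> (MIN i\<in>{1..n}. MIN j\<in>{1..m}.
                     min ((ereal t - ereal (h j)) / ereal (w j) + ereal (p i j))
                         (ereal (min (p i j + d j) (g i))) - bstar n b i k)
   \<longleftrightarrow> (\<forall>i\<in>{1..n}. bstar n b i k + ereal v \<le> ereal (Ub t i))"
proof -
  have e: "min ((ereal t - ereal (h j)) / ereal (w j) + ereal (p i j)) (ereal (min (p i j + d j) (g i)))
      = ereal (min (p i j + (t - h j) / w j) (min (p i j + d j) (g i)))"
    if j: "j \<in> {1..m}" for i j
  proof -
    have "w j > 0" using wd j by auto
    then show ?thesis by (simp add: field_simps del: ereal_min ereal_max add: ereal_min[symmetric])
  qed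
  have "ereal v \<le> (MIN i\<in>{1..n}. MIN j\<in>{1..m}.
                     min ((ereal t - ereal (h j)) / ereal (w j) + ereal (p i j))
                         (ereal (min (p i j + d j) (g i))) - bstar n b i k)
     \<longleftrightarrow> (\<forall>i\<in>{1..n}. \<forall>j\<in>{1..m}. ereal v \<le> min ((ereal t - ereal (h j)) / ereal (w j) + ereal (p i j))
                         (ereal (min (p i j + d j) (g i))) - bstar n b i k)"
    using ne_m ne_n by simp
  also have "\<dots> \<longleftrightarrow> (\<forall>i\<in>{1..n}. \<forall>j\<in>{1..m}. ereal v \<le> ereal (min (p i j + (t - h j) / w j) (min (p i j + d j) (g i))) - bstar n b i k)"
    using e by (intro ball_cong refl) (simp only:)
  also have "\<dots> \<longleftrightarrow> (\<forall>i\<in>{1..n}. bstar n b i k + ereal v \<le> ereal (Ub t i))"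
  proof (intro ball_cong refl)
    fix i assume i: "i \<in> {1..n}"
    show "(\<forall>j\<in>{1..m}. ereal v \<le> ereal (min (p i j + (t - h j) / w j) (min (p i j + d j) (g i))) - bstar n b i k)
       \<longleftrightarrow> bstar n b i k + ereal v \<le> ereal (Ub t i)"
    proof (cases "bstar n b i k")
      case PInf then show ?thesis using bstar_not_inf[OF i k] by simp
    next
      case MInf then show ?thesis by simp
    next
      case (real \<beta>)
      have "(\<forall>j\<in>{1..m}. ereal v \<le> ereal (min (p i j + (t - h j) / w j) (min (p i j + d j) (g i))) - bstar n b i k)
         \<longleftrightarrow> (\<forall>j\<in>{1..m}. \<beta> + v \<le> min (p i j + (t - h j) / w j) (min (p i j + d j) (g i)))"
        unfolding real by (intro ball_cong refl) (simp del: ereal_min ereal_max, linarith)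
      also have "\<dots> \<longleftrightarrow> \<beta> + v \<le> Ub t i" unfolding Ub_def using ne_m by simp
      finally show ?thesis unfolding real by simp
    qed
  qed
  finally show ?thesis .
qed


theorem main:
  shows "(\<exists>x. feasible n m p d b f g x \<and> ereal (objective n m p w h x) = theta n m p w d h b f g)
    \<and> (\<forall>x. feasible n m p d b f g x \<longrightarrow> theta n m p w d h b f g \<le> ereal (objective n m p w h x))
    \<and> (\<forall>x. (feasible n m p d b f g x \<and> ereal (objective n m p w h x) = theta n m p w d h b f g)
         \<longleftrightarrow> (\<exists>u :: nat \<Rightarrow> real.
               (\<forall>k\<in>{1..n}.
                  (MAX j\<in>{1..m}. max ((ereal (h j) - theta n m p w d h b f g) / ereal (w j) + ereal (p k j))
                                      (ereal (max (p k j - d j) (f k))))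
                  \<le> ereal (u k)
                \<and> ereal (u k) \<le>
                  (MIN i\<in>{1..n}. MIN j\<in>{1..m}.
                     min ((theta n m p w d h b f g - ereal (h j)) / ereal (w j) + ereal (p i j))
                         (ereal (min (p i j + d j) (g i))) - bstar n b i k))
             \<and> (\<forall>i\<in>{1..n}. ereal (x i) = (MAX k\<in>{1..n}. bstar n b i k + ereal (u k)))))"
proof -
  obtain t where th: "theta n m p w d h b f g = ereal t" using theta_finite by blast
  have P2: "\<forall>x. feasible n m p d b f g x \<longrightarrow> theta n m p w d h b f g \<le> ereal (objective n m p w h x)"
    using lower by blast
  have opt: "feasible n m p d b f g x \<and> ereal (objective n m p w h x) = theta n m p w d h b f g"
    if "\<forall>k\<in>{1..n}. Lb t k \<le> u k"
    and "\<forall>i\<in>{1..n}. \<forall>k\<in>{1..n}. bstar n b i k + ereal (u k) \<le> ereal (Ub t i)"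
    and "\<forall>i\<in>{1..n}. ereal (x i) = (MAX k\<in>{1..n}. bstar n b i k + ereal (u k))" for x u
  proof -
    have c: "feasible n m p d b f g x \<and> objective n m p w h x \<le> t" using construct[OF that] .
    then have "theta n m p w d h b f g \<le> ereal (objective n m p w h x)" using lower by blast
    then show ?thesis using c th by simp
  qed
  have P1: "\<exists>x. feasible n m p d b f g x \<and> ereal (objective n m p w h x) = theta n m p w d h b f g"
  proof -
    have ub: "\<forall>i\<in>{1..n}. \<forall>k\<in>{1..n}. bstar n b i k + ereal (Lb t k) \<le> ereal (Ub t i)"
      using theta_le_iff2[of t] th by simp
    define X where "X i = (MAX k\<in>{1..n}. bstar n b i k + ereal (Lb t k))" for i
    define x where "x i = real_of_ereal (X i)" for i
    have xe: "\<forall>i\<in>{1..n}. ereal (x i) = X i"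
    proof
      fix i assume i: "i \<in> {1..n}"
      have "ereal (Lb t i) = 0 + ereal (Lb t i)" by simp
      also have "\<dots> \<le> bstar n b i i + ereal (Lb t i)" using bstar_diag by (rule add_right_mono)
      also have "\<dots> \<le> X i" unfolding X_def using i by (simp add: Max_ge_iff)
      finally have "X i \<noteq> -\<infinity>" by auto
      moreover have "X i \<le> ereal (Ub t i)" unfolding X_def using ub i ne_n by simp
      then have "X i \<noteq> \<infinity>" by auto
      ultimately show "ereal (x i) = X i" unfolding x_def by (cases "X i") auto
    qed
    show ?thesis
      by (rule exI[of _ x], rule opt[of "Lb t"]) (use ub xe X_def in auto)
  qed
  have P3: "(feasible n m p d b f g x \<and> ereal (objective n m p w h x) = theta n m p w d h b f g)
         \<longleftrightarrow> (\<exists>u :: nat \<Rightarrow> real.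
               (\<forall>k\<in>{1..n}.
                  (MAX j\<in>{1..m}. max ((ereal (h j) - theta n m p w d h b f g) / ereal (w j) + ereal (p k j))
                                      (ereal (max (p k j - d j) (f k))))
                  \<le> ereal (u k)
                \<and> ereal (u k) \<le>
                  (MIN i\<in>{1..n}. MIN j\<in>{1..m}.
                     min ((theta n m p w d h b f g - ereal (h j)) / ereal (w j) + ereal (p i j))
                         (ereal (min (p i j + d j) (g i))) - bstar n b i k))
             \<and> (\<forall>i\<in>{1..n}. ereal (x i) = (MAX k\<in>{1..n}. bstar n b i k + ereal (u k))))" for x
    unfolding th lowbound_iff
  proof
    assume A: "feasible n m p d b f g x \<and> ereal (objective n m p w h x) = ereal t"
    then have feas: "feasible n m p d b f g x" and obj: "objective n m p w h x \<le> t" by auto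
    have cl: "\<forall>i\<in>{1..n}. \<forall>k\<in>{1..n}. b i k + ereal (x k) \<le> ereal (x i)"
      using feas unfolding feasible_def by blast
    have u1: "Lb t k \<le> x k" if "k \<in> {1..n}" for k using feas_bounds[OF feas obj that] by simp
    have u2: "\<forall>i\<in>{1..n}. bstar n b i k + ereal (x k) \<le> ereal (Ub t i)" if k: "k \<in> {1..n}" for k
    proof
      fix i assume i: "i \<in> {1..n}"
      have "bstar n b i k + ereal (x k) \<le> ereal (x i)" using closure_bstar[OF cl i k] .
      also have "\<dots> \<le> ereal (Ub t i)" using feas_bounds[OF feas obj i] by simp
      finally show "bstar n b i k + ereal (x k) \<le> ereal (Ub t i)" .
    qed
    have u3: "ereal (x i) = (MAX k\<in>{1..n}. bstar n b i k + ereal (x k))" if i: "i \<in> {1..n}" for i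
    proof (rule antisym)
      have "ereal (x i) = 0 + ereal (x i)" by simp
      also have "\<dots> \<le> bstar n b i i + ereal (x i)" using bstar_diag by (rule add_right_mono)
      also have "\<dots> \<le> (MAX k\<in>{1..n}. bstar n b i k + ereal (x k))" using i by (simp add: Max_ge_iff)
      finally show "ereal (x i) \<le> (MAX k\<in>{1..n}. bstar n b i k + ereal (x k))" .
      show "(MAX k\<in>{1..n}. bstar n b i k + ereal (x k)) \<le> ereal (x i)"
        using closure_bstar[OF cl i] ne_n by simp
    qed
    show "\<exists>u. (\<forall>k\<in>{1..n}. Lb t k \<le> u k \<and> ereal (u k) \<le> (MIN i\<in>{1..n}. MIN j\<in>{1..m}.
                     min ((ereal t - ereal (h j)) / ereal (w j) + ereal (p i j))
                         (ereal (min (p i j + d j) (g i))) - bstar n b i k))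
             \<and> (\<forall>i\<in>{1..n}. ereal (x i) = (MAX k\<in>{1..n}. bstar n b i k + ereal (u k)))"
    proof (rule exI[of _ x], intro conjI ballI)
      fix k assume k: "k \<in> {1..n}"
      show "Lb t k \<le> x k" using u1[OF k] .
    next
      fix k assume k: "k \<in> {1..n}"
      show "ereal (x k) \<le> (MIN i\<in>{1..n}. MIN j\<in>{1..m}.
                     min ((ereal t - ereal (h j)) / ereal (w j) + ereal (p i j))
                         (ereal (min (p i j + d j) (g i))) - bstar n b i k)"
        using upbound_iff[OF k, of "x k" t] u2[OF k] by blast
    next
      fix i assume i: "i \<in> {1..n}"
      show "ereal (x i) = (MAX k\<in>{1..n}. bstar n b i k + ereal (x k))" using u3[OF i] .
    qed
  next
    assume "\<exists>u. (\<forall>k\<in>{1..n}. Lb t k \<le> u k \<and> ereal (u k) \<le> (MIN i\<in>{1..n}. MIN j\<in>{1..m}.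
                     min ((ereal t - ereal (h j)) / ereal (w j) + ereal (p i j))
                         (ereal (min (p i j + d j) (g i))) - bstar n b i k))
             \<and> (\<forall>i\<in>{1..n}. ereal (x i) = (MAX k\<in>{1..n}. bstar n b i k + ereal (u k)))"
    then obtain u where u: "\<forall>k\<in>{1..n}. Lb t k \<le> u k \<and> ereal (u k) \<le> (MIN i\<in>{1..n}. MIN j\<in>{1..m}.
                     min ((ereal t - ereal (h j)) / ereal (w j) + ereal (p i j))
                         (ereal (min (p i j + d j) (g i))) - bstar n b i k)"
      and xe: "\<forall>i\<in>{1..n}. ereal (x i) = (MAX k\<in>{1..n}. bstar n b i k + ereal (u k))" by blast
    have "\<forall>i\<in>{1..n}. \<forall>k\<in>{1..n}. bstar n b i k + ereal (u k) \<le> ereal (Ub t i)"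
      using u upbound_iff by blast
    moreover have "\<forall>k\<in>{1..n}. Lb t k \<le> u k" using u by blast
    ultimately have "feasible n m p d b f g x \<and> ereal (objective n m p w h x) = theta n m p w d h b f g"
      using opt xe by blast
    then show "feasible n m p d b f g x \<and> ereal (objective n m p w h x) = ereal t" using th by simp
  qed
  show ?thesis using P1 P2 P3 by blast
qed

end

theorem corollary1:
  fixes n m :: nat
    and p :: "nat \<Rightarrow> nat \<Rightarrow> real"
    and w d h f g :: "nat \<Rightarrow> real"
    and b :: "nat \<Rightarrow> nat \<Rightarrow> ereal"
  assumes "n \<ge> 1" and "m \<ge> 1"
    and "\<forall>j\<in>{1..m}. w j > 0 \<and> d j > 0"
    and "\<forall>i\<in>{1..n}. \<forall>k\<in>{1..n}. b i k \<noteq> \<infinity>"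
    and "\<forall>i\<in>{1..n}. f i \<le> g i"
    and cond1: "\<forall>i\<in>{1..n}. \<forall>l\<in>{1..n}. cycle_max n b i l \<le> 0"
    and cond2: "\<forall>i\<in>{1..n}. \<forall>k\<in>{1..n}.
        bstar n b i k + ereal (max (MAX l\<in>{1..m}. p k l - d l) (f k))
          \<le> ereal (min (MIN j\<in>{1..m}. p i j + d j) (g i))"
  shows "(\<exists>x. feasible n m p d b f g x \<and> ereal (objective n m p w h x) = theta n m p w d h b f g)
    \<and> (\<forall>x. feasible n m p d b f g x \<longrightarrow> theta n m p w d h b f g \<le> ereal (objective n m p w h x))
    \<and> (\<forall>x. (feasible n m p d b f g x \<and> ereal (objective n m p w h x) = theta n m p w d h b f g)
         \<longleftrightarrow> (\<exists>u :: nat \<Rightarrow> real.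
               (\<forall>k\<in>{1..n}.
                  (MAX j\<in>{1..m}. max ((ereal (h j) - theta n m p w d h b f g) / ereal (w j) + ereal (p k j))
                                      (ereal (max (p k j - d j) (f k))))
                  \<le> ereal (u k)
                \<and> ereal (u k) \<le>
                  (MIN i\<in>{1..n}. MIN j\<in>{1..m}.
                     min ((theta n m p w d h b f g - ereal (h j)) / ereal (w j) + ereal (p i j))
                         (ereal (min (p i j + d j) (g i))) - bstar n b i k))
             \<and> (\<forall>i\<in>{1..n}. ereal (x i) = (MAX k\<in>{1..n}. bstar n b i k + ereal (u k)))))"
proof -
  interpret C: cfg n m p w d h f g b
    using assms by unfold_locales auto
  show ?thesis by (rule C.main)
qed

end
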